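(* Let $h$ be the state on $U_n^{nc}$ defined below. Let $1\le i_1,j_1,\dots,i_r,j_r\le n$ and $\epsilon_1,\dots,\epsilon_r\in\{\emptyset,*\}$. If $\#\{m:\epsilon_m=*\}\ne\#\{m:\epsilon_m=\emptyset\}$, then $h(u^{\epsilon_1}_{i_1j_1}\cdots u^{\epsilon_r}_{i_rj_r})=0$. If $\#\{m:\epsilon_m=*\}=\#\{m:\epsilon_m=\emptyset\}$, then $$h(u^{\epsilon_1}_{i_1j_1}\cdots u^{\epsilon_r}_{i_rj_r})=\prod_{k=-r}^{r}h\Big(\prod^{\rightarrow}_{l\in S_k}u^{\epsilon_l}_{i_lj_l}\Big),$$ where $S_k=\{l\in\{1,\dots,r\}:k=\#\{m>l:\epsilon_m=\emptyset\}-\#\{m\ge l:\epsilon_m=*\}\}$, $\prod^{\rightarrow}$ denotes the product in increasing order of $l$, and an empty product equals $1$ (so $h$ of it is $1$).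
   Context: $U_n^{nc}$ is the universal unital $*$-algebra generated by $u_{ij}$ ($1\le i,j\le n$) with $\sum_ku_{ki}^*u_{kj}=\delta_{ij}=\sum_ku_{ik}u_{jk}^*$; $u^{\emptyset}_{ij}=u_{ij}$. Let $H=\ell^2(\mathbb Z)\otimes\bigotimes_{k\in\mathbb Z}M_n(\mathbb C)$, where $M_n(\mathbb C)$ is a Hilbert space with inner product $\langle A,B\rangle=\mathrm{Tr}(A^*B)/n$ and the infinite tensor product is taken with respect to the reference vector $I_n$; $(\delta_k)$ is the standard basis of $\ell^2(\mathbb Z)$ and $E_{ij}$ the matrix units. Define $U_{ij}(\delta_k\otimes(\cdots\otimes M_{k-1}\otimes M_k\otimes M_{k+1}\otimes\cdots))=\delta_{k+1}\otimes(\cdots\otimes M_{k-1}\otimes E_{ji}M_k\otimes M_{k+1}\otimes\cdots)$, with adjoint $U_{ij}^*(\delta_k\otimes(\cdots\otimes M_{k-1}\otimes\cdots))=\delta_{k-1}\otimes(\cdots\otimes E_{ij}M_{k-1}\otimes M_k\otimes\cdots)$. Let $j:U_n^{nc}\to B(H)$ be the unital $*$-homomorphism with $j(u_{ij})=U_{ij}$, $\Omega=\delta_0\otimes\bigotimes_kI_n$, and $h(a)=\langle\Omega,j(a)\Omega\rangle$. *)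

theory Defs
  imports Complex_Main "Jordan_Normal_Form.Matrix"
begin

text \<open>Matrix unit E_{ij} in M_n(C), indices 1..n (stored 0-based inside mat).\<close>
definition munit :: "nat \<Rightarrow> nat \<Rightarrow> nat \<Rightarrow> complex mat" where
  "munit n i j = mat n n (\<lambda>(a,b). if a = i - 1 \<and> b = j - 1 then 1 else 0)"

definition minner :: "nat \<Rightarrow> complex mat \<Rightarrow> complex mat \<Rightarrow> complex" where
  "minner n A B = (\<Sum>a<n. \<Sum>b<n. cnj (A $$ (a,b)) * B $$ (a,b)) / of_nat n"

text \<open>Elementary tensors delta_k (x) (x)_m M_m of H, with M_m = I_n for all but
  finitely many m (infinite tensor product w.r.t. the reference vector I_n).\<close>
type_synonym etensor = "int \<times> (int \<Rightarrow> complex mat)"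

definition Omega :: "nat \<Rightarrow> etensor" where
  "Omega n = (0, \<lambda>_. 1\<^sub>m n)"

text \<open>Inner product of two elementary tensors (product over the finitely many
  sites where a factor differs from I_n; the others contribute <I_n,I_n> = 1).\<close>
definition einner :: "nat \<Rightarrow> etensor \<Rightarrow> etensor \<Rightarrow> complex" where
  "einner n x y = (if fst x = fst y then
      (\<Prod>m\<in>{m. snd x m \<noteq> 1\<^sub>m n \<or> snd y m \<noteq> 1\<^sub>m n}. minner n (snd x m) (snd y m))
    else 0)"

text \<open>Action of U_{ij} (eps = False) and U_{ij}^* (eps = True) on elementary tensors.\<close>
fun gen_act :: "nat \<Rightarrow> bool \<times> nat \<times> nat \<Rightarrow> etensor \<Rightarrow> etensor" where
  "gen_act n (False, i, j) (k, M) = (k + 1, M(k := munit n j i * M k))"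
| "gen_act n (True, i, j) (k, M) = (k - 1, M(k - 1 := munit n i j * M (k - 1)))"

text \<open>A word [(eps_1,i_1,j_1),...,(eps_r,i_r,j_r)] stands for the monomial
  u^{eps_1}_{i_1 j_1} ... u^{eps_r}_{i_r j_r}; j of it acts by composition
  (rightmost factor first).\<close>
fun word_act :: "nat \<Rightarrow> (bool \<times> nat \<times> nat) list \<Rightarrow> etensor \<Rightarrow> etensor" where
  "word_act n [] x = x"
| "word_act n (g # w) x = gen_act n g (word_act n w x)"

text \<open>The state h(a) = <Omega, j(a) Omega> evaluated on a monomial.\<close>
definition h_word :: "nat \<Rightarrow> (bool \<times> nat \<times> nat) list \<Rightarrow> complex" where
  "h_word n w = einner n (Omega n) (word_act n w (Omega n))"

definition Sk_word :: "(bool \<times> nat \<times> nat) list \<Rightarrow> int \<Rightarrow> (bool \<times> nat \<times> nat) list" where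
  "Sk_word w k = map (\<lambda>l. w ! (l - 1))
     (filter (\<lambda>l. k = int (card {m. l < m \<and> m \<le> length w \<and> \<not> fst (w ! (m - 1))})
                    - int (card {m. l \<le> m \<and> m \<le> length w \<and> fst (w ! (m - 1))}))
        [1..<length w + 1])"

end

theory Submission
  imports Defs
begin

definition disp :: "(bool \<times> nat \<times> nat) list \<Rightarrow> int" where
  "disp w = int (length (filter (\<lambda>g. \<not> fst g) w)) - int (length (filter fst w))"

lemma disp_Nil[simp]: "disp [] = 0" by (simp add: disp_def)
lemma disp_Cons[simp]: "disp (g # w) = disp w + (if fst g then -1 else 1)"
  by (simp add: disp_def)

fun sites :: "(bool \<times> nat \<times> nat) list \<Rightarrow> int list" where
  "sites [] = []"
| "sites (g # w) = (disp w - (if fst g then 1 else 0)) # sites w"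

lemma length_sites[simp]: "length (sites w) = length w"
  by (induction w) auto

definition sub :: "(bool \<times> nat \<times> nat) list \<Rightarrow> int \<Rightarrow> (bool \<times> nat \<times> nat) list" where
  "sub w k = map ((!) w) (filter (\<lambda>j. sites w ! j = k) [0..<length w])"

lemma sub_Nil[simp]: "sub [] k = []" by (simp add: sub_def)

lemma sub_Cons: "sub (g # w) k =
   (if disp w - (if fst g then 1 else 0) = k then g # sub w k else sub w k)"
proof -
  have "[0..<length (g # w)] = 0 # map Suc [0..<length w]"
    by (simp add: upt_conv_Cons map_Suc_upt del: upt_Suc)
  then show ?thesis
    by (simp add: sub_def filter_map o_def)
qed

definition Eg :: "nat \<Rightarrow> bool \<times> nat \<times> nat \<Rightarrow> complex mat" where
  "Eg n g = (if fst g then munit n (fst (snd g)) (snd (snd g)) else munit n (snd (snd g)) (fst (snd g)))"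

fun prodE :: "nat \<Rightarrow> (bool \<times> nat \<times> nat) list \<Rightarrow> complex mat" where
  "prodE n [] = 1\<^sub>m n"
| "prodE n (g # v) = Eg n g * prodE n v"

lemma act_lemma: "word_act n w (0, \<lambda>_. 1\<^sub>m n) = (disp w, \<lambda>m. prodE n (sub w m))"
proof (induction w)
  case Nil
  then show ?case by (simp add: sub_def)
next
  case (Cons g w)
  obtain b i j where g: "g = (b, i, j)" by (cases g) auto
  show ?case
    using Cons by (cases b) (auto simp: g sub_Cons Eg_def fun_eq_iff)
qed

lemma minner_one: "n \<ge> 1 \<Longrightarrow> minner n (1\<^sub>m n) (1\<^sub>m n) = 1"
proof -
  assume n: "n \<ge> 1"
  have "(\<Sum>a<n. \<Sum>b<n. cnj (1\<^sub>m n $$ (a,b)) * 1\<^sub>m n $$ (a,b)) = (\<Sum>a<n. (\<Sum>b<n. if a = b then 1 else 0 :: complex))"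
    by (intro sum.cong) auto
  also have "\<dots> = of_nat n" by simp
  finally show ?thesis using n by (simp add: minner_def del: index_one_mat)
qed

lemma einner_lemma:
  assumes "n \<ge> 1" "finite S" "\<forall>m. m \<notin> S \<longrightarrow> f m = 1\<^sub>m n"
  shows "einner n (Omega n) (0, f) = (\<Prod>m\<in>S. minner n (1\<^sub>m n) (f m))"
proof -
  have "einner n (Omega n) (0, f) = (\<Prod>m\<in>{m. f m \<noteq> 1\<^sub>m n}. minner n (1\<^sub>m n) (f m))"
    by (simp add: einner_def Omega_def)
  also have "\<dots> = (\<Prod>m\<in>S. minner n (1\<^sub>m n) (f m))"
    by (rule prod.mono_neutral_left) (use assms minner_one in auto)
  finally show ?thesis .
qed

lemma sub_notin: "m \<notin> set (sites w) \<Longrightarrow> sub w m = []"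
  unfolding sub_def by (auto simp: filter_empty_conv)

lemma H_lemma:
  assumes "n \<ge> 1" "finite S" "set (sites w) \<subseteq> S"
  shows "h_word n w = (if disp w = 0 then (\<Prod>m\<in>S. minner n (1\<^sub>m n) (prodE n (sub w m))) else 0)"
proof (cases "disp w = 0")
  case True
  have "h_word n w = einner n (Omega n) (0, \<lambda>m. prodE n (sub w m))"
    unfolding h_word_def by (simp add: act_lemma True Omega_def[of n] del: Omega_def)
  also have "\<dots> = (\<Prod>m\<in>S. minner n (1\<^sub>m n) (prodE n (sub w m)))"
  proof (rule einner_lemma)
    show "\<forall>m. m \<notin> S \<longrightarrow> prodE n (sub w m) = 1\<^sub>m n"
    proof (intro allI impI)
      fix m assume "m \<notin> S"
      then have "m \<notin> set (sites w)" using assms(3) by auto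
      then show "prodE n (sub w m) = 1\<^sub>m n" by (simp add: sub_notin)
    qed
  qed (use assms in auto)
  finally show ?thesis using True by simp
next
  case False
  then show ?thesis unfolding h_word_def by (simp add: act_lemma Omega_def einner_def)
qed

lemma sites_bound: "\<forall>s\<in>set (sites w). - int (length w) \<le> s \<and> s \<le> int (length w)"
proof (induction w)
  case Nil then show ?case by simp
next
  case (Cons g w)
  have "\<bar>disp w\<bar> \<le> int (length w)"
    unfolding disp_def using length_filter_le[of fst w] length_filter_le[of "\<lambda>g. \<not> fst g" w] by linarith
  then show ?case using Cons by auto
qed

lemma D_lemma: "disp (sub w k) = (if disp w > k then 1 else 0) - (if 0 > k then 1 else 0)
   \<and> (\<forall>s\<in>set (sites (sub w k)). s = (if 0 > k then -1 else 0))"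
proof (induction w)
  case Nil then show ?case by simp
next
  case (Cons g w)
  then show ?case by (auto simp: sub_Cons)
qed

lemma sub_h:
  assumes "n \<ge> 1" "disp w = 0"
  shows "h_word n (sub w k) = minner n (1\<^sub>m n) (prodE n (sub w k))"
proof -
  define v where "v = sub w k"
  define c :: int where "c = (if 0 > k then -1 else 0)"
  have dv: "disp v = 0" and sv: "\<forall>s\<in>set (sites v). s = c"
    using D_lemma[of w k] assms(2) by (auto simp: v_def c_def)
  have "sub v c = v"
  proof -
    have "filter (\<lambda>j. sites v ! j = c) [0..<length v] = [0..<length v]"
      using sv by (auto intro!: filter_True simp: nth_mem)
    then show ?thesis by (simp add: sub_def map_nth)
  qed
  moreover have "h_word n v = (\<Prod>m\<in>{c}. minner n (1\<^sub>m n) (prodE n (sub v m)))"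
    using H_lemma[of n "{c}" v] assms dv sv by auto
  ultimately show ?thesis by (simp add: v_def)
qed

lemma sites_nth: "j < length w \<Longrightarrow> sites w ! j =
   int (length (filter (\<lambda>g. \<not> fst g) (drop (Suc j) w))) - int (length (filter fst (drop j w)))"
proof (induction w arbitrary: j)
  case Nil then show ?case by simp
next
  case (Cons g w)
  then show ?case by (cases j) (auto simp: disp_def)
qed

lemma card_lemma: "card {m. a < m \<and> m \<le> length w \<and> P (w ! (m - Suc 0))} = length (filter P (drop a w))"
proof -
  have "{m. a < m \<and> m \<le> length w \<and> P (w ! (m - Suc 0))} =
        (\<lambda>i. i + a + 1) ` {i. i < length (drop a w) \<and> P (drop a w ! i)}"
    apply (rule Set.set_eqI)
    apply (rule iffI)
     apply (rule_tac x = "x - a - 1" in image_eqI)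
      apply (auto simp: add.commute)
    done
  then show ?thesis
    by (simp add: length_filter_conv_card card_image inj_on_def)
qed

lemma E_lemma: "Sk_word w k = sub w k"
proof -
  have "[1..<length w + 1] = map Suc [0..<length w]"
    by (simp add: map_Suc_upt)
  then have "Sk_word w k = map ((!) w)
     (filter (\<lambda>j. k = int (card {m. Suc j < m \<and> m \<le> length w \<and> \<not> fst (w ! (m - 1))})
                    - int (card {m. Suc j \<le> m \<and> m \<le> length w \<and> fst (w ! (m - 1))})) [0..<length w])"
    by (simp add: Sk_word_def filter_map o_def)
  also have "\<dots> = sub w k"
    unfolding sub_def
    apply (rule arg_cong[where f = "map ((!) w)"])
    apply (rule filter_cong[OF refl])
    apply (simp add: sites_nth Suc_le_eq card_lemma[where P = "\<lambda>g. \<not> fst g"] card_lemma[where P = fst])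
    apply auto
    done
  finally show ?thesis .
qed

theorem mainTheorem9:
  fixes n :: nat and w :: "(bool \<times> nat \<times> nat) list"
  assumes "n \<ge> 1"
    and "\<forall>g\<in>set w. fst (snd g) \<in> {1..n} \<and> snd (snd g) \<in> {1..n}"
  shows "(length (filter fst w) \<noteq> length (filter (\<lambda>g. \<not> fst g) w) \<longrightarrow> h_word n w = 0)
       \<and> (length (filter fst w) = length (filter (\<lambda>g. \<not> fst g) w) \<longrightarrow>
            h_word n w = (\<Prod>k\<in>{- int (length w)..int (length w)}. h_word n (Sk_word w k)))"
proof -
  let ?S = "{- int (length w)..int (length w)}"
  have fin: "finite ?S" and sub: "set (sites w) \<subseteq> ?S" using sites_bound[of w] by auto
  have H: "h_word n w = (if disp w = 0 then (\<Prod>m\<in>?S. minner n (1\<^sub>m n) (prodE n (sub w m))) else 0)"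
    using H_lemma[OF assms(1) fin sub] .
  show ?thesis
  proof (intro conjI impI)
    assume "length (filter fst w) \<noteq> length (filter (\<lambda>g. \<not> fst g) w)"
    then have "disp w \<noteq> 0" by (simp add: disp_def)
    then show "h_word n w = 0" using H by simp
  next
    assume "length (filter fst w) = length (filter (\<lambda>g. \<not> fst g) w)"
    then have d: "disp w = 0" by (simp add: disp_def)
    then show "h_word n w = (\<Prod>k\<in>?S. h_word n (Sk_word w k))"
      using H by (simp add: E_lemma sub_h[OF assms(1) d])
  qed
qed

end
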